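(* Let $\Bbbk$ be a field of characteristic zero. The algebra $A=\Bbbk[x_1,x_2,x_3,x_4,x_5]/(x_1^4,x_2^4,x_3^4,x_4^4,x_5^4,x_1 x_2 x_3 x_4)$ fails the WLP by injectivity in degree $6$.
   Context: $\mathrm{HF}(A,k)=\dim_\Bbbk A_k$. $A$ fails the WLP by injectivity in degree $i$ if $\mathrm{HF}(A,i)\le\mathrm{HF}(A,i+1)$ and $\times(x_1+\cdots+x_5): A_i\to A_{i+1}$ is not injective. *)

theory Defs
  imports Complex_Main "HOL-Library.Poly_Mapping"
begin

text \<open>Variable x_(i+1) of the paper is index i.\<close>

type_synonym 'k mpoly = "(nat \<Rightarrow>\<^sub>0 nat) \<Rightarrow>\<^sub>0 'k"

definition Var :: "nat \<Rightarrow> 'k::comm_ring_1 mpoly" where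
  "Var i = Poly_Mapping.single (Poly_Mapping.single i 1) 1"

definition pscale :: "'k::comm_ring_1 \<Rightarrow> 'k mpoly \<Rightarrow> 'k mpoly" where
  "pscale c p = Poly_Mapping.map (\<lambda>a. c * a) p"

definition mdeg :: "(nat \<Rightarrow>\<^sub>0 nat) \<Rightarrow> nat" where
  "mdeg m = (\<Sum>i\<in>Poly_Mapping.keys m. Poly_Mapping.lookup m i)"

definition polys :: "nat \<Rightarrow> 'k::comm_ring_1 mpoly set" where
  "polys n = {p. \<forall>m\<in>Poly_Mapping.keys p. Poly_Mapping.keys m \<subseteq> {..<n}}"

definition hom_polys :: "nat \<Rightarrow> nat \<Rightarrow> 'k::comm_ring_1 mpoly set" where
  "hom_polys n d = {p \<in> polys n. \<forall>m\<in>Poly_Mapping.keys p. mdeg m = d}"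

definition gen_ideal :: "nat \<Rightarrow> (nat \<Rightarrow> 'k::comm_ring_1 mpoly) \<Rightarrow> nat \<Rightarrow> 'k mpoly set" where
  "gen_ideal n g r = {(\<Sum>j<r. h j * g j) | h. \<forall>j<r. h j \<in> polys n}"

text \<open>Hilbert function of A = k[x_1,...,x_n]/I in degree d for a homogeneous ideal I:
  dim_k A_d = dim_k (R_d / I_d) = dim_k R_d - dim_k I_d.\<close>
definition HF :: "nat \<Rightarrow> 'k::field mpoly set \<Rightarrow> nat \<Rightarrow> nat" where
  "HF n I d = vector_space.dim pscale (hom_polys n d :: 'k mpoly set)
             - vector_space.dim pscale (I \<inter> hom_polys n d)"

text \<open>Multiplication by the linear form L : A_d \<rightarrow> A_(d+1) is injective iff
  every f in R_d with L f in I already lies in I.\<close>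
definition mult_injective :: "nat \<Rightarrow> 'k::field mpoly set \<Rightarrow> 'k mpoly \<Rightarrow> nat \<Rightarrow> bool" where
  "mult_injective n I L d = (\<forall>f\<in>hom_polys n d. L * f \<in> I \<longrightarrow> f \<in> I)"

definition fails_WLP_inj :: "nat \<Rightarrow> 'k::field mpoly set \<Rightarrow> nat \<Rightarrow> bool" where
  "fails_WLP_inj n I i =
     (HF n I i \<le> HF n I (Suc i) \<and> \<not> mult_injective n I (\<Sum>j<n. Var j) i)"

definition gens5p9 :: "nat \<Rightarrow> 'k::comm_ring_1 mpoly" where
  "gens5p9 j = (if j < 5 then Var j ^ 4 else Var 0 * Var 1 * Var 2 * Var 3)"

end

theory Submission
  imports Defs "HOL-Library.Poly_Mapping"
begin


lemma pscale_eq: "pscale c p = Poly_Mapping.single 0 c * p"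
  unfolding pscale_def by (metis mult_map_scale_conv_mult)

lemma lookup_pscale: "Poly_Mapping.lookup (pscale c p) m = c * Poly_Mapping.lookup p m"
  unfolding pscale_def by (simp add: Poly_Mapping.map.rep_eq when_def)

lemma vs: "vector_space (pscale :: 'k::field \<Rightarrow> 'k mpoly \<Rightarrow> 'k mpoly)"
  apply unfold_locales
  apply (simp_all add: pscale_eq distrib_left single_add distrib_right mult_single)
  done

interpretation V: vector_space "pscale :: 'k::field \<Rightarrow> 'k mpoly \<Rightarrow> 'k mpoly"
  by (rule vs)

lemma keys_pscale: "Poly_Mapping.keys (pscale c p) \<subseteq> Poly_Mapping.keys p"
  by (auto simp: in_keys_iff lookup_pscale)

lemma poly_sum_monos: "p = (\<Sum>m\<in>Poly_Mapping.keys p. Poly_Mapping.single m (Poly_Mapping.lookup p m))"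
  by (rule poly_mapping_eqI) (simp add: lookup_sum lookup_single when_def in_keys_iff)

lemma single1_inj: "Poly_Mapping.single m (1::'k::field) = Poly_Mapping.single m' 1 \<Longrightarrow> m = m'"
  by (metis lookup_single_eq lookup_single_not_eq one_neq_zero)

definition mset_of :: "(nat \<Rightarrow>\<^sub>0 nat) set \<Rightarrow> 'k::field mpoly set" where
  "mset_of M = (\<lambda>m. Poly_Mapping.single m 1) ` M"

lemma span_monos: "V.span (mset_of M :: 'k::field mpoly set) = {p. Poly_Mapping.keys p \<subseteq> M}"
proof
  have "V.subspace {p :: 'k mpoly. Poly_Mapping.keys p \<subseteq> M}"
    unfolding V.subspace_def
  proof (intro conjI ballI allI)
    fix x y :: "'k mpoly" and c :: 'k
    assume x: "x \<in> {p. Poly_Mapping.keys p \<subseteq> M}" and y: "y \<in> {p. Poly_Mapping.keys p \<subseteq> M}"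
    show "x + y \<in> {p. Poly_Mapping.keys p \<subseteq> M}" using x y keys_add[of x y] by blast
  next
    fix x :: "'k mpoly" and c :: 'k
    assume x: "x \<in> {p. Poly_Mapping.keys p \<subseteq> M}"
    show "pscale c x \<in> {p. Poly_Mapping.keys p \<subseteq> M}" using x keys_pscale[of c x] by blast
  qed simp
  moreover have "mset_of M \<subseteq> {p :: 'k mpoly. Poly_Mapping.keys p \<subseteq> M}"
    by (auto simp: mset_of_def)
  ultimately show "V.span (mset_of M :: 'k::field mpoly set) \<subseteq> {p. Poly_Mapping.keys p \<subseteq> M}"
    by (rule V.span_minimal[rotated])
next
  show "{p. Poly_Mapping.keys p \<subseteq> M} \<subseteq> V.span (mset_of M :: 'k::field mpoly set)"
  proof
    fix p :: "'k mpoly" assume "p \<in> {p. Poly_Mapping.keys p \<subseteq> M}"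
    hence k: "Poly_Mapping.keys p \<subseteq> M" by simp
    have e: "Poly_Mapping.single m (Poly_Mapping.lookup p m) = pscale (Poly_Mapping.lookup p m) (Poly_Mapping.single m 1)" for m
      by (rule poly_mapping_eqI) (simp add: lookup_pscale lookup_single when_def)
    have "p = (\<Sum>m\<in>Poly_Mapping.keys p. pscale (Poly_Mapping.lookup p m) (Poly_Mapping.single m 1))"
      using poly_sum_monos[of p] e by simp
    also have "\<dots> \<in> V.span (mset_of M)"
      apply (rule V.span_sum) apply (rule V.span_scale) apply (rule V.span_base)
      using k by (auto simp: mset_of_def)
    finally show "p \<in> V.span (mset_of M)" .
  qed
qed

lemma indep_monos: "V.independent (mset_of M :: 'k::field mpoly set)"
proof -
  { fix S u v assume S: "S \<subseteq> mset_of M" "finite S" and z: "(\<Sum>v\<in>S. pscale (u v) v) = (0::'k mpoly)" and v: "v \<in> S"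
    obtain m where m: "v = Poly_Mapping.single m 1" using S v by (auto simp: mset_of_def)
    have "0 = Poly_Mapping.lookup (\<Sum>v\<in>S. pscale (u v) v) m" using z by simp
    also have "\<dots> = (\<Sum>w\<in>S. u w * Poly_Mapping.lookup w m)" by (simp add: lookup_sum lookup_pscale)
    also have "\<dots> = (\<Sum>w\<in>S. if w = v then u v else 0)"
    proof (rule sum.cong)
      fix w assume "w \<in> S"
      then obtain m' where "w = Poly_Mapping.single m' 1" using S by (auto simp: mset_of_def)
      thus "u w * Poly_Mapping.lookup w m = (if w = v then u v else 0)"
        using m by (auto simp: lookup_single when_def dest: single1_inj)
    qed simp
    also have "\<dots> = u v" using v S by simp
    finally have "u v = 0" by simp }
  thus ?thesis unfolding V.independent_explicit_finite_subsets by blast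
qed

lemma dim_monos: "finite M \<Longrightarrow> V.dim {p :: 'k::field mpoly. Poly_Mapping.keys p \<subseteq> M} = card M"
proof -
  assume "finite M"
  have "inj_on (\<lambda>m. Poly_Mapping.single m (1::'k)) M"
    by (rule inj_onI) (metis lookup_single_eq lookup_single_not_eq one_neq_zero)
  hence "card (mset_of M :: 'k mpoly set) = card M" unfolding mset_of_def by (rule card_image)
  moreover have "V.dim {p :: 'k::field mpoly. Poly_Mapping.keys p \<subseteq> M} = V.dim (V.span (mset_of M :: 'k mpoly set))"
    by (simp add: span_monos)
  moreover have "V.dim (V.span (mset_of M :: 'k mpoly set)) = card (mset_of M :: 'k mpoly set)"
    using V.dim_span_eq_card_independent[OF indep_monos, of M] by (simp only: V.dim_span)
  ultimately show ?thesis by simp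
qed



abbreviation Ii :: "'k::field mpoly set" where "Ii \<equiv> gen_ideal 5 gens5p9 6"

definition G :: "nat \<Rightarrow> (nat \<Rightarrow>\<^sub>0 nat)" where
  "G j = (if j < 5 then Poly_Mapping.single j 4 else
     Poly_Mapping.single 0 1 + Poly_Mapping.single 1 1 + Poly_Mapping.single 2 1 + Poly_Mapping.single 3 1)"

lemma Var_pow: "Var i ^ n = Poly_Mapping.single (Poly_Mapping.single i n) 1"
proof (induction n)
  case (Suc n)
  have "Poly_Mapping.single i 1 + Poly_Mapping.single i n = Poly_Mapping.single i (Suc n)"
    by (simp flip: single_add)
  with Suc show ?case by (simp add: Var_def mult_single)
qed simp

lemma gens_eq: "gens5p9 j = Poly_Mapping.single (G j) 1"
  unfolding gens5p9_def G_def Var_pow by (simp add: Var_def mult_single)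

definition inI :: "(nat \<Rightarrow>\<^sub>0 nat) \<Rightarrow> bool" where
  "inI m = ((\<exists>i<5. 4 \<le> Poly_Mapping.lookup m i) \<or> (\<forall>i<4. 1 \<le> Poly_Mapping.lookup m i))"

lemma polys_0: "0 \<in> polys n" by (simp add: polys_def)
lemma polys_add: "p \<in> polys n \<Longrightarrow> q \<in> polys n \<Longrightarrow> p + q \<in> polys n"
proof -
  assume "p \<in> polys n" "q \<in> polys n"
  thus ?thesis unfolding polys_def using keys_add[of p q] by (auto simp del: keys_add)
qed
lemma polys_mult: "p \<in> polys n \<Longrightarrow> q \<in> polys n \<Longrightarrow> p * q \<in> polys n"
proof -
  assume p: "p \<in> polys n" and q: "q \<in> polys n"
  { fix m assume "m \<in> Poly_Mapping.keys (p * q)"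
    then obtain a b where "m = a + b" "a \<in> Poly_Mapping.keys p" "b \<in> Poly_Mapping.keys q"
      using keys_mult[of p q] by blast
    hence "Poly_Mapping.keys m \<subseteq> {..<n}" using p q keys_add[of a b] unfolding polys_def by blast }
  thus ?thesis unfolding polys_def by blast
qed
lemma polys_sum: "(\<And>i. i \<in> A \<Longrightarrow> f i \<in> polys n) \<Longrightarrow> sum f A \<in> polys n"
  by (induction A rule: infinite_finite_induct) (auto intro: polys_0 polys_add)
lemma polys_single: "Poly_Mapping.keys m \<subseteq> {..<n} \<Longrightarrow> Poly_Mapping.single m c \<in> polys n"
  by (simp add: polys_def)

lemma keys_G: "Poly_Mapping.keys (G j) \<subseteq> {..<5}"
  by (auto simp: G_def in_keys_iff lookup_add lookup_single when_def split: if_splits)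

lemma gens_polys: "gens5p9 j \<in> polys 5"
  unfolding gens_eq by (rule polys_single[OF keys_G])

lemma inI_G: "j < 6 \<Longrightarrow> inI (a + G j)"
  by (cases "j < 5") (auto simp: inI_def G_def lookup_add lookup_single when_def)

lemma I_sub: "(p :: 'k::field mpoly) \<in> Ii \<Longrightarrow> p \<in> polys 5 \<and> (\<forall>m\<in>Poly_Mapping.keys p. inI m)"
proof -
  assume "p \<in> Ii"
  then obtain h where p: "p = (\<Sum>j<6. h j * gens5p9 j)" and h: "\<forall>j<6. h j \<in> polys 5"
    by (auto simp: gen_ideal_def)
  have "p \<in> polys 5" unfolding p using h by (auto intro!: polys_sum polys_mult gens_polys)
  moreover
  { fix m assume "m \<in> Poly_Mapping.keys p"
    hence "m \<in> (\<Union>j\<in>{..<6}. Poly_Mapping.keys (h j * gens5p9 j))"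
      unfolding p using keys_sum[of "\<lambda>j. h j * gens5p9 j" "{..<6}"] by (rule subsetD[rotated])
    then obtain j where "j < 6" "m \<in> Poly_Mapping.keys (h j * gens5p9 j)" by blast
    then obtain a where "j < 6" "m = a + G j"
      using keys_mult[of "h j" "gens5p9 j"] by (auto simp: gens_eq split: if_splits)
    hence "inI m" using inI_G by simp }
  ultimately show ?thesis by blast
qed

lemma I_add: "p \<in> Ii \<Longrightarrow> q \<in> Ii \<Longrightarrow> p + q \<in> (Ii :: 'k::field mpoly set)"
proof -
  assume "p \<in> Ii" "q \<in> Ii"
  then obtain h1 h2 where "p = (\<Sum>j<6. h1 j * gens5p9 j)" "\<forall>j<6. h1 j \<in> polys 5"
    "q = (\<Sum>j<6. h2 j * gens5p9 j)" "\<forall>j<6. h2 j \<in> polys 5"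
    by (auto simp: gen_ideal_def)
  hence "p + q = (\<Sum>j<6. (\<lambda>j. h1 j + h2 j) j * gens5p9 j)" "\<forall>j<6. (\<lambda>j. h1 j + h2 j) j \<in> polys 5"
    by (auto simp: sum.distrib distrib_right intro: polys_add)
  thus ?thesis unfolding gen_ideal_def by (intro CollectI exI[of _ "\<lambda>j. h1 j + h2 j"]) simp
qed

lemma I_0: "0 \<in> (Ii :: 'k::field mpoly set)"
  unfolding gen_ideal_def by (rule CollectI, rule exI[of _ "\<lambda>_. 0"]) (simp add: polys_0)

lemma I_sum: "(\<And>i. i \<in> A \<Longrightarrow> f i \<in> Ii) \<Longrightarrow> sum f A \<in> (Ii :: 'k::field mpoly set)"
  by (induction A rule: infinite_finite_induct) (auto intro: I_0 I_add)

lemma I_single: "inI m \<Longrightarrow> Poly_Mapping.keys m \<subseteq> {..<5} \<Longrightarrow> Poly_Mapping.single m c \<in> (Ii :: 'k::field mpoly set)"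
proof -
  assume m: "inI m" "Poly_Mapping.keys m \<subseteq> {..<5}"
  obtain j where j: "j < 6" "\<forall>i. Poly_Mapping.lookup (G j) i \<le> Poly_Mapping.lookup m i"
  proof (cases "\<exists>i<5. 4 \<le> Poly_Mapping.lookup m i")
    case True
    then obtain i where "i < 5" "4 \<le> Poly_Mapping.lookup m i" by blast
    thus ?thesis by (intro that[of i]) (auto simp: G_def lookup_single when_def)
  next
    case False
    hence "\<forall>i<4. 1 \<le> Poly_Mapping.lookup m i" using m(1) by (auto simp: inI_def)
    thus ?thesis apply (intro that[of 5])
      by (auto simp: G_def lookup_add lookup_single when_def)
  qed
  define d where "d = m - G j"
  have md: "m = d + G j" using j(2)
    by (intro poly_mapping_eqI) (simp add: d_def lookup_add lookup_minus)
  have kd: "Poly_Mapping.keys d \<subseteq> {..<5}"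
  proof
    fix x assume "x \<in> Poly_Mapping.keys d"
    hence "x \<in> Poly_Mapping.keys m" by (auto simp: d_def in_keys_iff lookup_minus)
    thus "x \<in> {..<5}" using m(2) by blast
  qed
  define h where "h = (\<lambda>j'. if j' = j then Poly_Mapping.single d c else (0 :: 'k mpoly))"
  have "(\<Sum>j'<6. h j' * gens5p9 j') = (\<Sum>j'<6. if j' = j then Poly_Mapping.single d c * gens5p9 j else 0)"
    by (rule sum.cong) (auto simp: h_def)
  also have "\<dots> = Poly_Mapping.single d c * gens5p9 j" using j(1) by simp
  also have "\<dots> = Poly_Mapping.single m c" by (simp add: gens_eq mult_single md)
  finally have "Poly_Mapping.single m c = (\<Sum>j'<6. h j' * gens5p9 j')" by simp
  moreover have "\<forall>j'<6. h j' \<in> polys 5" using polys_single[OF kd] by (auto simp: h_def polys_0)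
  ultimately show ?thesis unfolding gen_ideal_def by (intro CollectI exI[of _ h]) simp
qed

lemma I_char: "((p :: 'k::field mpoly) \<in> Ii) = (p \<in> polys 5 \<and> (\<forall>m\<in>Poly_Mapping.keys p. inI m))"
proof
  assume a: "p \<in> polys 5 \<and> (\<forall>m\<in>Poly_Mapping.keys p. inI m)"
  have "p = (\<Sum>m\<in>Poly_Mapping.keys p. Poly_Mapping.single m (Poly_Mapping.lookup p m))"
    by (rule poly_sum_monos)
  also have "\<dots> \<in> Ii" using a by (intro I_sum I_single) (auto simp: polys_def)
  finally show "p \<in> Ii" .
qed (rule I_sub)



definition mon :: "nat list \<Rightarrow> (nat \<Rightarrow>\<^sub>0 nat)" where
  "mon xs = Abs_poly_mapping (\<lambda>i. if i < length xs then xs!i else 0)"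

definition tl5 :: "(nat \<Rightarrow>\<^sub>0 nat) \<Rightarrow> nat list" where
  "tl5 m = map (Poly_Mapping.lookup m) [0..<5]"

lemma lookup_mon: "Poly_Mapping.lookup (mon xs) i = (if i < length xs then xs!i else 0)"
proof -
  have "finite {i. (if i < length xs then xs!i else 0) \<noteq> 0}"
    by (rule finite_subset[of _ "{..<length xs}"]) (auto split: if_splits)
  thus ?thesis unfolding mon_def by simp
qed

lemma keys_mon: "Poly_Mapping.keys (mon xs) \<subseteq> {..<length xs}"
  by (auto simp: in_keys_iff lookup_mon split: if_splits)

lemma mon_tl5: "Poly_Mapping.keys m \<subseteq> {..<5} \<Longrightarrow> mon (tl5 m) = m"
  by (rule poly_mapping_eqI) (auto simp: lookup_mon tl5_def in_keys_iff)

lemma tl5_mon: "length xs = 5 \<Longrightarrow> tl5 (mon xs) = xs"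
  by (rule nth_equalityI) (auto simp: lookup_mon tl5_def)

lemma length_tl5 [simp]: "length (tl5 m) = 5" by (simp add: tl5_def)

lemma mdeg_eq: "Poly_Mapping.keys m \<subseteq> {..<5} \<Longrightarrow> mdeg m = sum_list (tl5 m)"
proof -
  assume k: "Poly_Mapping.keys m \<subseteq> {..<5}"
  have "mdeg m = (\<Sum>i\<in>{..<5}. Poly_Mapping.lookup m i)"
    unfolding mdeg_def by (rule sum.mono_neutral_left) (use k in \<open>auto simp: in_keys_iff\<close>)
  also have "\<dots> = sum_list (tl5 m)"
    unfolding tl5_def by (simp add: lessThan_atLeast0 flip: sum_set_upt_conv_sum_list_nat)
  finally show ?thesis .
qed

definition inL :: "nat list \<Rightarrow> bool" where
  "inL xs = ((\<exists>x\<in>set xs. 4 \<le> x) \<or> (\<forall>x\<in>set (take 4 xs). 1 \<le> x))"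

lemma inI_eq: "inI m = inL (tl5 m)"
proof -
  have "take 4 (tl5 m) = map (Poly_Mapping.lookup m) [0..<4]" by (simp add: tl5_def take_map)
  thus ?thesis unfolding inI_def inL_def by (auto simp: tl5_def)
qed

definition Md :: "nat \<Rightarrow> (nat \<Rightarrow>\<^sub>0 nat) set" where
  "Md d = {m. Poly_Mapping.keys m \<subseteq> {..<5} \<and> mdeg m = d}"

lemma hom_eq: "hom_polys 5 d = {p. Poly_Mapping.keys p \<subseteq> Md d}"
  by (auto simp: hom_polys_def polys_def Md_def)

lemma homI_eq: "(Ii :: 'k::field mpoly set) \<inter> hom_polys 5 d = {p. Poly_Mapping.keys p \<subseteq> {m \<in> Md d. inI m}}"
  apply (rule set_eqI)
  apply (simp only: Int_iff I_char)
  unfolding hom_polys_def polys_def Md_def by blast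

lemma Md_image: "Md d = mon ` {xs. length xs = 5 \<and> sum_list xs = d}"
proof
  show "Md d \<subseteq> mon ` {xs. length xs = 5 \<and> sum_list xs = d}"
  proof
    fix m assume "m \<in> Md d"
    hence "Poly_Mapping.keys m \<subseteq> {..<5}" "mdeg m = d" by (auto simp: Md_def)
    thus "m \<in> mon ` {xs. length xs = 5 \<and> sum_list xs = d}"
      by (intro image_eqI[of _ _ "tl5 m"]) (auto simp: mon_tl5 mdeg_eq)
  qed
next
  show "mon ` {xs. length xs = 5 \<and> sum_list xs = d} \<subseteq> Md d"
  proof
    fix m assume "m \<in> mon ` {xs. length xs = 5 \<and> sum_list xs = d}"
    then obtain xs where "m = mon xs" "length xs = 5" "sum_list xs = d" by blast
    moreover have "Poly_Mapping.keys (mon xs) \<subseteq> {..<5}" using keys_mon[of xs] \<open>length xs = 5\<close> by simp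
    ultimately show "m \<in> Md d" by (simp add: Md_def mdeg_eq tl5_mon)
  qed
qed

lemma finite_Md: "finite (Md d)"
proof -
  have "{xs. length xs = 5 \<and> sum_list xs = d} \<subseteq> set (List.n_lists 5 [0..<d+1])"
    by (auto simp: set_n_lists dest: member_le_sum_list)
  thus ?thesis unfolding Md_image by (meson finite_imageI finite_set finite_subset)
qed

lemma inj_mon: "inj_on mon {xs. length xs = 5}"
  by (rule inj_onI) (metis mem_Collect_eq tl5_mon)

lemma notinL_set: "\<not> inL xs \<Longrightarrow> set xs \<subseteq> set [0..<4]"
  unfolding inL_def set_upt by force

definition Sd :: "nat \<Rightarrow> nat list list" where
  "Sd d = filter (\<lambda>xs. sum_list xs = d \<and> \<not> inL xs) (List.n_lists 5 [0..<4])"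

lemma HF_eq: "HF 5 (Ii :: 'k::field mpoly set) d = card (set (Sd d))"
proof -
  have "HF 5 (Ii :: 'k mpoly set) d = card (Md d) - card {m \<in> Md d. inI m}"
    unfolding HF_def hom_eq homI_eq[unfolded hom_eq]
    by (simp add: dim_monos finite_Md)
  also have "\<dots> = card (Md d - {m \<in> Md d. inI m})"
    by (rule card_Diff_subset[symmetric]) (rule finite_subset[OF _ finite_Md], blast, blast)
  also have "Md d - {m \<in> Md d. inI m} = mon ` set (Sd d)"
  proof -
    have "set (Sd d) = {xs. length xs = 5 \<and> sum_list xs = d \<and> \<not> inL xs}"
    proof (rule set_eqI)
      fix xs show "xs \<in> set (Sd d) \<longleftrightarrow> xs \<in> {xs. length xs = 5 \<and> sum_list xs = d \<and> \<not> inL xs}"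
      proof
        assume "xs \<in> set (Sd d)"
        thus "xs \<in> {xs. length xs = 5 \<and> sum_list xs = d \<and> \<not> inL xs}"
          unfolding Sd_def set_filter set_n_lists mem_Collect_eq by (elim conjE) (intro conjI)
      next
        assume a: "xs \<in> {xs. length xs = 5 \<and> sum_list xs = d \<and> \<not> inL xs}"
        hence b: "length xs = 5" "sum_list xs = d" "\<not> inL xs" by simp_all
        have c: "set xs \<subseteq> set [0..<4]" by (rule notinL_set[OF b(3)])
        show "xs \<in> set (Sd d)"
          unfolding Sd_def set_filter set_n_lists mem_Collect_eq using b c by (intro conjI)
      qed
    qed
    moreover have "Md d - {m \<in> Md d. inI m} = mon ` {xs. length xs = 5 \<and> sum_list xs = d \<and> \<not> inL xs}"
    proof -
      have "{m \<in> Md d. inI m} = mon ` {xs. length xs = 5 \<and> sum_list xs = d \<and> inL xs}"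
        unfolding Md_image by (auto simp: inI_eq tl5_mon)
      moreover have "mon ` {xs. length xs = 5 \<and> sum_list xs = d} - mon ` {xs. length xs = 5 \<and> sum_list xs = d \<and> inL xs}
          = mon ` ({xs. length xs = 5 \<and> sum_list xs = d} - {xs. length xs = 5 \<and> sum_list xs = d \<and> inL xs})"
        by (rule inj_on_image_set_diff[OF inj_mon, symmetric]) auto
      moreover have "{xs. length xs = 5 \<and> sum_list xs = d} - {xs. length xs = 5 \<and> sum_list xs = d \<and> inL xs}
          = {xs. length xs = 5 \<and> sum_list xs = d \<and> \<not> inL xs}" by auto
      ultimately show ?thesis unfolding Md_image by simp
    qed
    ultimately show ?thesis by simp
  qed
  also have "card (mon ` set (Sd d)) = card (set (Sd d))"
    by (rule card_image, rule inj_on_subset[OF inj_mon]) (auto simp only: Sd_def set_filter set_n_lists)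
  finally show ?thesis .
qed



lemma S6: "distinct (Sd 6) \<and> length (Sd 6) = 120" by code_simp
lemma S7: "distinct (Sd 7) \<and> length (Sd 7) = 124" by code_simp

lemma HF6: "HF 5 (Ii :: 'k::field mpoly set) 6 = 120"
  using S6 by (simp add: HF_eq distinct_card)
lemma HF7: "HF 5 (Ii :: 'k::field mpoly set) 7 = 124"
  using S7 by (simp add: HF_eq distinct_card)

definition coef :: "nat \<Rightarrow> nat \<Rightarrow> int" where
  "coef a b = (if a = 2 then 6 else if a = 1 \<and> b = 1 then -3 else if a = 1 then 8
     else if b = 3 then 6 else -2)"
definition cf :: "nat list \<Rightarrow> int" where
  "cf xs = (if sum_list xs = 6 \<and> \<not> inL xs then coef (count_list xs 3) (count_list xs 2) else 0)"

lemma ck: "list_all (\<lambda>xs. \<not> inL xs \<longrightarrow>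
   sum_list (map (\<lambda>j. if 1 \<le> xs!j then cf (xs[j := xs!j - 1]) else 0) [0..<5]) = 0) (List.n_lists 5 [0..<4])"
  by code_simp

definition ff :: "'k::field_char_0 mpoly" where
  "ff = Abs_poly_mapping (\<lambda>m. if Poly_Mapping.keys m \<subseteq> {..<5} then of_int (cf (tl5 m)) else 0)"

lemma lookup_ff: "Poly_Mapping.lookup (ff :: 'k::field_char_0 mpoly) m =
   (if Poly_Mapping.keys m \<subseteq> {..<5} then of_int (cf (tl5 m)) else 0)"
proof -
  have "{m. (if Poly_Mapping.keys m \<subseteq> {..<5} then of_int (cf (tl5 m)) else (0::'k)) \<noteq> 0} \<subseteq> Md 6"
    by (auto simp: Md_def mdeg_eq cf_def split: if_splits)
  hence "finite {m. (if Poly_Mapping.keys m \<subseteq> {..<5} then of_int (cf (tl5 m)) else (0::'k)) \<noteq> 0}"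
    using finite_Md finite_subset by blast
  thus ?thesis unfolding ff_def by simp
qed

lemma ff_hom: "(ff :: 'k::field_char_0 mpoly) \<in> hom_polys 5 6"
  unfolding hom_eq
proof (rule CollectI, rule subsetI)
  fix m assume "m \<in> Poly_Mapping.keys (ff :: 'k mpoly)"
  hence "Poly_Mapping.lookup (ff :: 'k mpoly) m \<noteq> 0" by (simp add: in_keys_iff)
  hence k: "Poly_Mapping.keys m \<subseteq> {..<5}" and "cf (tl5 m) \<noteq> 0" by (auto simp: lookup_ff split: if_splits)
  hence "sum_list (tl5 m) = 6" by (auto simp: cf_def split: if_splits)
  thus "m \<in> Md 6" using k by (simp add: Md_def mdeg_eq)
qed

lemma ff_notin: "(ff :: 'k::field_char_0 mpoly) \<notin> Ii"
proof
  assume "(ff :: 'k mpoly) \<in> Ii"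
  hence "(ff :: 'k mpoly) \<in> polys 5 \<and> (\<forall>m\<in>Poly_Mapping.keys (ff :: 'k mpoly). inI m)" by (rule iffD1[OF I_char])
  hence *: "\<forall>m\<in>Poly_Mapping.keys (ff :: 'k mpoly). inI m" by (rule conjunct2)
  define m0 where "m0 = mon [3,3,0,0,0]"
  have k0: "Poly_Mapping.keys m0 \<subseteq> {..<5}" using keys_mon[of "[3,3,0,0,0]"] by (simp add: m0_def numeral_eq_Suc)
  have t0: "tl5 m0 = [3,3,0,0,0]" by (simp add: m0_def tl5_mon)
  have "cf [3,3,0,0,0] = 6" by (simp add: cf_def inL_def coef_def)
  hence "m0 \<in> Poly_Mapping.keys (ff :: 'k mpoly)" using k0 t0 by (simp add: in_keys_iff lookup_ff)
  moreover have "\<not> inI m0" by (simp add: inI_eq t0 inL_def)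
  ultimately show False using * by auto
qed

lemma lookup_single_mult: "Poly_Mapping.lookup (Poly_Mapping.single k c * (p :: 'k::field mpoly)) (k + q) = c * Poly_Mapping.lookup p q"
proof -
  have "Poly_Mapping.single k c * p = (\<Sum>a\<in>Poly_Mapping.keys p. Poly_Mapping.single (k + a) (c * Poly_Mapping.lookup p a))"
    by (subst poly_sum_monos[of p]) (simp add: sum_distrib_left mult_single)
  hence "Poly_Mapping.lookup (Poly_Mapping.single k c * p) (k + q) =
      (\<Sum>a\<in>Poly_Mapping.keys p. if a = q then c * Poly_Mapping.lookup p a else 0)"
    by (simp add: lookup_sum lookup_single when_def)
  also have "\<dots> = c * Poly_Mapping.lookup p q" by (simp add: in_keys_iff)
  finally show ?thesis .
qed

lemma lookup_single_mult0: "(\<And>q. m \<noteq> k + q) \<Longrightarrow> Poly_Mapping.lookup (Poly_Mapping.single k c * (p :: 'k::field mpoly)) m = 0"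
proof (rule ccontr)
  assume h: "\<And>q. m \<noteq> k + q" and "Poly_Mapping.lookup (Poly_Mapping.single k c * p) m \<noteq> 0"
  hence "m \<in> Poly_Mapping.keys (Poly_Mapping.single k c * p)" by (simp add: in_keys_iff)
  then obtain a b where "m = a + b" "a \<in> Poly_Mapping.keys (Poly_Mapping.single k c)"
    using keys_mult[of "Poly_Mapping.single k c" p] by blast
  hence "m = k + b" by (simp split: if_splits)
  thus False using h by blast
qed

lemma lookup_Var_mult: "Poly_Mapping.lookup (Var j * (p :: 'k::field mpoly)) m =
  (if 1 \<le> Poly_Mapping.lookup m j then Poly_Mapping.lookup p (m - Poly_Mapping.single j 1) else 0)"
proof (cases "1 \<le> Poly_Mapping.lookup m j")
  case True
  hence "m = Poly_Mapping.single j 1 + (m - Poly_Mapping.single j 1)"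
    by (intro poly_mapping_eqI) (auto simp: lookup_add lookup_minus lookup_single when_def)
  then show ?thesis using True lookup_single_mult[of "Poly_Mapping.single j 1" 1 p "m - Poly_Mapping.single j 1"]
    by (simp add: Var_def)
next
  case False
  have "m \<noteq> Poly_Mapping.single j 1 + q" for q
  proof
    assume "m = Poly_Mapping.single j 1 + q"
    hence "Poly_Mapping.lookup m j = 1 + Poly_Mapping.lookup q j" by (simp add: lookup_add)
    with False show False by simp
  qed
  thus ?thesis using False by (simp add: Var_def lookup_single_mult0)
qed

lemma tl5_minus: "j < 5 \<Longrightarrow> tl5 (m - Poly_Mapping.single j 1) = (tl5 m)[j := tl5 m ! j - 1]"
  by (rule nth_equalityI) (auto simp: tl5_def lookup_minus lookup_single when_def nth_list_update)

lemma Lff_in: "(\<Sum>j<5. Var j) * (ff :: 'k::field_char_0 mpoly) \<in> Ii"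
proof -
  have fp: "(ff :: 'k mpoly) \<in> polys 5" using ff_hom[where 'k='k] by (simp add: hom_polys_def)
  have Lp: "(\<Sum>j<5. Var j) \<in> (polys 5 :: 'k mpoly set)"
    by (intro polys_sum) (auto simp: Var_def intro!: polys_single)
  have P: "(\<Sum>j<5. Var j) * (ff :: 'k mpoly) \<in> polys 5" by (rule polys_mult[OF Lp fp])
  { fix m assume m: "m \<in> Poly_Mapping.keys ((\<Sum>j<5. Var j) * (ff :: 'k mpoly))"
    have km: "Poly_Mapping.keys m \<subseteq> {..<5}" using P m by (auto simp: polys_def)
    have "inI m"
    proof (rule ccontr)
      assume ni: "\<not> inI m"
      define xs where "xs = tl5 m"
      have nx: "\<not> inL xs" using ni by (simp add: xs_def inI_eq)
      have xsin: "xs \<in> set (List.n_lists 5 [0..<4])"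
        using notinL_set[OF nx] by (simp add: set_n_lists xs_def)
      have zero: "sum_list (map (\<lambda>j. if 1 \<le> xs!j then cf (xs[j := xs!j - 1]) else 0) [0..<5]) = 0"
        using ck xsin nx by (simp add: list_all_iff)
      have "Poly_Mapping.lookup ((\<Sum>j<5. Var j) * (ff :: 'k mpoly)) m =
          (\<Sum>j<5. if 1 \<le> Poly_Mapping.lookup m j then Poly_Mapping.lookup (ff :: 'k mpoly) (m - Poly_Mapping.single j 1) else 0)"
        by (simp add: sum_distrib_right lookup_sum lookup_Var_mult)
      also have "\<dots> = (\<Sum>j<5. of_int (if 1 \<le> xs!j then cf (xs[j := xs!j - 1]) else 0))"
      proof (rule sum.cong)
        fix j :: nat assume j: "j \<in> {..<5}"
        have "Poly_Mapping.keys (m - Poly_Mapping.single j 1) \<subseteq> {..<5}"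
        proof
          fix x assume "x \<in> Poly_Mapping.keys (m - Poly_Mapping.single j 1)"
          hence "x \<in> Poly_Mapping.keys m" by (auto simp: in_keys_iff lookup_minus)
          thus "x \<in> {..<5}" using km by blast
        qed
        moreover have "xs ! j = Poly_Mapping.lookup m j" using j by (simp add: xs_def tl5_def)
        ultimately show "(if 1 \<le> Poly_Mapping.lookup m j then Poly_Mapping.lookup (ff :: 'k mpoly) (m - Poly_Mapping.single j 1) else 0) =
          (of_int (if 1 \<le> xs!j then cf (xs[j := xs!j - 1]) else 0) :: 'k)"
          using j tl5_minus[of j m] by (simp add: lookup_ff xs_def)
      qed simp
      also have "\<dots> = of_int (\<Sum>j<5. (if 1 \<le> xs!j then cf (xs[j := xs!j - 1]) else 0))"
        by simp
      also have "(\<Sum>j<5. (if 1 \<le> xs!j then cf (xs[j := xs!j - 1]) else 0)) = 0"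
        using zero by (simp add: lessThan_atLeast0 flip: sum_set_upt_conv_sum_list_nat)
      finally show False using m by (simp add: in_keys_iff)
    qed }
  thus ?thesis using P by (simp only: I_char) simp
qed

theorem lemma5p9:
  shows "fails_WLP_inj 5 (gen_ideal 5 (gens5p9 :: nat \<Rightarrow> 'k::field_char_0 mpoly) 6) 6"
  unfolding fails_WLP_inj_def mult_injective_def
  using HF6[where 'k='k] HF7[where 'k='k] ff_hom[where 'k='k] ff_notin[where 'k='k] Lff_in[where 'k='k]
  by (auto simp del: One_nat_def)

end
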